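(* Let $p\ge2$. Then: (1) For every $1\le l<p$, $J_{p,l}=-J_{p,p-l}$ and $I_{p,l}\subset J_{p,l}$. (2) The intervals of $\mathcal J_p$ are pairwise disjoint and ordered as $J_{p+1,p}\prec J_{p,p-1}\prec J_{p+1,p-1}\prec\cdots\prec J_{p+1,2}\prec J_{p,1}\prec J_{p+1,1}$. (3) $r(\mathcal J_p)\le40$ and $d(\mathcal J_p)\ge\dfrac{1}{20p^3}$.
   Context: Chebyshev polynomials: $S_0=0$, $S_1=1$, $S_{p+1}(x)=xS_p(x)-S_{p-1}(x)$. For $p\ge2$, $1\le l<p$: $I_{p,l}=\{2\cos\theta:|\theta-\frac{l\pi}{p}|\le\frac{0.1\pi}{p},\ |S_p(2\cos\theta)|\le\frac14\}$. $\epsilon_{p,l}=0.1$ if $2\le p\le4$, and $\epsilon_{p,l}=\min\{0.1,\frac{l+0.1}{3.92p},\frac{p-l+0.1}{3.92p}\}$ if $p\ge5$; $J_{p,l}=\{2\cos\theta:|\theta-\frac{l\pi}{p}|\le\frac{\epsilon_{p,l}\pi}{p}\}$. $\mathcal J_p=\{J_{p,l}:1\le l<p\}\cup\{J_{p+1,l}:1\le l<p+1\}$. For disjoint compact intervals $I,J$: $I\prec J$ means $I$ lies to the left of $J$; $d(I,J)=\min\{|x-y|:x\in I,y\in J\}$, $D(I,J)=\max\{|x-y|:x\in I,y\in J\}$, $r(I,J)=D(I,J)/d(I,J)$. For a finite disjoint family $\mathcal I$: $d(\mathcal I)=\min_{I\ne J}d(I,J)$, $r(\mathcal I)=\max_{I\ne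 J}r(I,J)$. $-J=\{-x:x\in J\}$. *)

theory Defs
  imports "HOL-Analysis.Analysis"
begin

fun S :: "nat \<Rightarrow> real \<Rightarrow> real" where
  "S 0 x = 0"
| "S (Suc 0) x = 1"
| "S (Suc (Suc p)) x = x * S (Suc p) x - S p x"

definition Iint :: "nat \<Rightarrow> nat \<Rightarrow> real set" where
  "Iint p l = {2 * cos \<theta> | \<theta>. \<bar>\<theta> - real l * pi / real p\<bar> \<le> 0.1 * pi / real p
                              \<and> \<bar>S p (2 * cos \<theta>)\<bar> \<le> 1/4}"

definition eps :: "nat \<Rightarrow> nat \<Rightarrow> real" where
  "eps p l = (if p \<le> 4 then 0.1
              else min 0.1 (min ((real l + 0.1) / (3.92 * real p))
                                ((real p - real l + 0.1) / (3.92 * real p))))"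

definition Jint :: "nat \<Rightarrow> nat \<Rightarrow> real set" where
  "Jint p l = {2 * cos \<theta> | \<theta>. \<bar>\<theta> - real l * pi / real p\<bar> \<le> eps p l * pi / real p}"

definition Jfam :: "nat \<Rightarrow> real set set" where
  "Jfam p = {Jint p l | l. 1 \<le> l \<and> l < p} \<union> {Jint (p+1) l | l. 1 \<le> l \<and> l < p + 1}"

definition prec :: "real set \<Rightarrow> real set \<Rightarrow> bool" where
  "prec I J \<longleftrightarrow> (\<forall>x\<in>I. \<forall>y\<in>J. x < y)"

definition dmin :: "real set \<Rightarrow> real set \<Rightarrow> real" where
  "dmin I J = Inf {\<bar>x - y\<bar> | x y. x \<in> I \<and> y \<in> J}"

definition Dmax :: "real set \<Rightarrow> real set \<Rightarrow> real" where
  "Dmax I J = Sup {\<bar>x - y\<bar> | x y. x \<in> I \<and> y \<in> J}"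

definition ratio :: "real set \<Rightarrow> real set \<Rightarrow> real" where
  "ratio I J = Dmax I J / dmin I J"

definition fam_d :: "real set set \<Rightarrow> real" where
  "fam_d F = Inf {dmin I J | I J. I \<in> F \<and> J \<in> F \<and> I \<noteq> J}"

definition fam_r :: "real set set \<Rightarrow> real" where
  "fam_r F = Sup {ratio I J | I J. I \<in> F \<and> J \<in> F \<and> I \<noteq> J}"

end

theory Submission
  imports Defs
begin


lemma cos_lb: fixes x :: real assumes "0 \<le> x" shows "1 - x^2/2 \<le> cos x"
proof -
  let ?f = "\<lambda>x. cos x - 1 + x^2/2"
  have "?f 0 \<le> ?f x"
  proof (rule DERIV_nonneg_imp_nondecreasing[OF assms])
    fix u :: real assume "0 \<le> u" "u \<le> x"
    have "DERIV ?f u :> (- sin u + u)"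
      by (auto intro!: derivative_eq_intros simp: field_simps)
    moreover have "- sin u + u \<ge> 0" using sin_x_le_x[OF \<open>0 \<le> u\<close>] by simp
    ultimately show "\<exists>y. DERIV ?f u :> y \<and> y \<ge> 0" by blast
  qed
  then show ?thesis by simp
qed

lemma sin_lb: fixes x :: real assumes "0 \<le> x" shows "x - x^3/6 \<le> sin x"
proof -
  let ?f = "\<lambda>x. sin x - x + x^3/6"
  have "?f 0 \<le> ?f x"
  proof (rule DERIV_nonneg_imp_nondecreasing[OF assms])
    fix u :: real assume "0 \<le> u" "u \<le> x"
    have "DERIV ?f u :> (cos u - 1 + u^2/2)"
      by (auto intro!: derivative_eq_intros simp: field_simps)
    moreover have "cos u - 1 + u^2/2 \<ge> 0" using cos_lb[OF \<open>0 \<le> u\<close>] by simp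
    ultimately show "\<exists>y. DERIV ?f u :> y \<and> y \<ge> 0" by blast
  qed
  then show ?thesis by simp
qed

lemma pi_ub: "pi \<le> 3927/1250" using pi_approx by (simp add: power_numeral_reduce)
lemma pi_lb: "6283/2000 \<le> pi" using pi_approx by (simp add: power_numeral_reduce)

lemma sin_lin: fixes x :: real assumes "0 \<le> x" "x \<le> pi/2" shows "(29/50) * x \<le> sin x"
proof -
  have "x \<le> (3927/2500)" using assms pi_ub by linarith
  hence "x^2 \<le> (3927/2500)^2" using assms by (intro power_mono) auto
  hence "x^2 \<le> (63/25)" by (simp add: power2_eq_square)
  hence "x * x^2 \<le> x * (63/25)" using assms by (intro mult_left_mono) auto
  hence "x^3/6 \<le> (21/50) * x" by (simp add: power3_eq_cube power2_eq_square)
  thus ?thesis using sin_lb[OF assms(1)] by linarith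
qed

lemma sin_lin2: fixes x :: real assumes "0 \<le> x" "x \<le> pi/10" shows "(49/50) * x \<le> sin x"
proof -
  have "x \<le> (63/200)" using assms pi_ub by linarith
  hence "x^2 \<le> (63/200)^2" using assms by (intro power_mono) auto
  hence "x^2 \<le> (3/25)" by (simp add: power2_eq_square)
  hence "x * x^2 \<le> x * (3/25)" using assms by (intro mult_left_mono) auto
  hence "x^3/6 \<le> (1/50) * x" by (simp add: power3_eq_cube power2_eq_square)
  thus ?thesis using sin_lb[OF assms(1)] by linarith
qed



lemma sin_lip: fixes x y :: real shows "sin x \<le> sin y + \<bar>x - y\<bar>"
proof -
  have "sin x - sin y = 2 * sin ((x - y) / 2) * cos ((x + y) / 2)" by (rule sin_diff_sin)
  also have "\<dots> \<le> 2 * \<bar>sin ((x - y) / 2)\<bar> * \<bar>cos ((x + y) / 2)\<bar>"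
    by (metis abs_ge_self abs_mult abs_numeral mult.assoc)
  also have "\<dots> \<le> 2 * \<bar>(x - y) / 2\<bar> * 1"
    by (intro mult_mono abs_sin_x_le_abs_x abs_cos_le_one) auto
  finally show ?thesis by simp
qed

lemma sin_mid_lb:
  fixes m s :: real
  assumes "0 < s" "s \<le> pi/2" "s \<le> m" "m \<le> pi - s"
  shows "(29/50) * s \<le> sin m"
proof (cases "m \<le> pi/2")
  case True
  then have "(29/50) * m \<le> sin m" using assms by (intro sin_lin) auto
  then show ?thesis using assms by linarith
next
  case False
  then have "(29/50) * (pi - m) \<le> sin (pi - m)" using assms by (intro sin_lin) auto
  then show ?thesis using assms by (simp add: sin_pi_minus)
qed

lemma trig_main:
  fixes a1 b1 a2 b2 p :: real
  assumes p: "p \<ge> 2" and o: "a1 \<le> b1" "b1 < a2" "a2 \<le> b2"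
    and w1: "b1 - a1 \<le> 6*(a2-b1)" and w2: "b2 - a2 \<le> 6*(a2-b1)"
    and w1': "b1 - a1 \<le> pi/(5*p)" and w2': "b2 - a2 \<le> pi/(5*p)"
    and lo: "9*pi/(10*(p+1)) \<le> a1" and hi: "b2 \<le> pi - 9*pi/(10*(p+1))"
    and g: "pi/(4*p*(p+1)) \<le> a2 - b1"
  shows "cos a1 - cos b2 \<le> 40*(cos b1 - cos a2)"
    and "1/(20*p^3) \<le> 2*cos b1 - 2*cos a2"
proof -
  define m1 where "m1 = (a1+b2)/2"
  define d1 where "d1 = (b2-a1)/2"
  define m2 where "m2 = (b1+a2)/2"
  define d2 where "d2 = (a2-b1)/2"
  define s0 where "s0 = 9*pi/(10*(p+1))"
  have pp: "p > 0" using p by simp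
  have h1: "cos a1 - cos b2 = 2 * sin m1 * sin d1" unfolding m1_def d1_def by (rule cos_diff_cos)
  have h2: "cos b1 - cos a2 = 2 * sin m2 * sin d2" unfolding m2_def d2_def by (rule cos_diff_cos)
  have s0pos: "0 < s0" unfolding s0_def using pp by simp
  have "s0 \<le> 3*pi/10" unfolding s0_def using p by (simp add: field_simps)
  hence s0le: "s0 \<le> pi/2" using pi_gt_zero by linarith
  have lo': "s0 \<le> a1" and hi': "b2 \<le> pi - s0" using lo hi unfolding s0_def by auto
  have m2b: "s0 \<le> m2" "m2 \<le> pi - s0" unfolding m2_def using o lo' hi' by auto
  have sm2: "(29/50) * s0 \<le> sin m2" using sin_mid_lb[OF s0pos s0le m2b] .
  have d2pos: "0 < d2" unfolding d2_def using o by simp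
  have d2le: "d2 \<le> pi/2" unfolding d2_def using o lo' hi' s0pos by simp
  have sd2: "(29/50) * d2 \<le> sin d2" using sin_lin d2pos d2le by simp
  have d1pos: "0 \<le> d1" unfolding d1_def using o by simp
  have d1le: "d1 \<le> pi/2" unfolding d1_def using o lo' hi' s0pos by simp
  have sd1: "sin d1 \<le> d1" using sin_x_le_x d1pos by simp
  have sd1p: "0 \<le> sin d1" using d1pos d1le by (intro sin_ge_zero) auto
  have sm1p: "0 \<le> sin m1" unfolding m1_def using o lo' hi' s0pos by (intro sin_ge_zero) auto
  have mm: "\<bar>m1 - m2\<bar> \<le> pi/(10*p)" unfolding m1_def m2_def using w1' w2' o by (simp add: field_simps) 
  have sm1: "sin m1 \<le> sin m2 + pi/(10*p)" using sin_lip[of m1 m2] mm by linarith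
  have d1d2: "d1 \<le> 13 * d2" unfolding d1_def d2_def using w1 w2 by simp
  have key: "pi/(10*p) \<le> (102/130) * ((29/50) * s0)"
    unfolding s0_def using p pi_gt_zero by (simp add: field_simps)
  have "cos a1 - cos b2 \<le> 2 * (sin m2 + pi/(10*p)) * (13 * d2)"
    unfolding h1 using sm1 sd1 d1d2 sd1p sm1p d1pos
    by (intro mult_mono) auto
  also have "\<dots> \<le> 2 * (sin m2 + (102/130) * sin m2) * (13 * d2)"
  proof -
    have "pi/(10*p) \<le> (102/130) * sin m2" using key sm2 by linarith
    then show ?thesis using d2pos by (intro mult_right_mono) auto
  qed
  also have "\<dots> = 80 * sin m2 * ((29/50) * d2)" by (simp add: algebra_simps)
  also have "\<dots> \<le> 80 * sin m2 * sin d2"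
    using sd2 sm2 s0pos by (intro mult_left_mono) auto
  finally show "cos a1 - cos b2 \<le> 40*(cos b1 - cos a2)" unfolding h2 by simp
  have "pi/(8*p*(p+1)) = (pi/(4*p*(p+1)))/2" by simp
  moreover have "pi/(4*p*(p+1)) / 2 \<le> (a2-b1)/2" using g by (rule divide_right_mono) simp
  ultimately have d2lb: "pi/(8*p*(p+1)) \<le> d2" unfolding d2_def by simp
  have "4 * ((29/50) * s0) * ((29/50) * (pi/(8*p*(p+1)))) \<le> 4 * sin m2 * sin d2"
  proof -
    have "(29/50) * (pi/(8*p*(p+1))) \<le> (29/50) * d2" using d2lb by (rule mult_left_mono) simp
    hence "(29/50) * (pi/(8*p*(p+1))) \<le> sin d2" using sd2 by linarith
    moreover have "0 \<le> (29/50) * (pi/(8*p*(p+1)))" using pp by simp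
    ultimately show ?thesis using sm2 s0pos by (intro mult_mono) auto
  qed
  moreover have "27/(10*(p+1)) \<le> s0" unfolding s0_def using pi_lb pp
    by (intro divide_right_mono) auto
  moreover have "3/(8*p*(p+1)) \<le> pi/(8*p*(p+1))" using pi_lb pp
    by (intro divide_right_mono) auto
  ultimately have "4 * ((29/50) * (27/(10*(p+1)))) * ((29/50) * (3/(8*p*(p+1)))) \<le> 4 * sin m2 * sin d2"
    using pp by (smt (verit) mult_mono mult_nonneg_nonneg divide_nonneg_nonneg)
  moreover have "1/(20*p^3) \<le> 4 * ((29/50) * (27/(10*(p+1)))) * ((29/50) * (3/(8*p*(p+1))))"
  proof -
    have "2*p \<le> p*p" using p by (intro mult_right_mono) auto
    moreover have "(p+1)^2 = p*p + 2*p + 1" "(9/4)*p^2 = (9/4)*(p*p)" by (simp_all add: power2_eq_square algebra_simps)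
    ultimately have H: "p*p + 2*p + 1 \<le> (9/4)*(p*p)" using p by linarith
    have "25000 * ((p + 1) * (p + 1)) \<le> 68121 * (p * p)" using H p by (simp add: algebra_simps)
    have p1: "p + 1 \<noteq> 0" "p \<noteq> 0" using pp by auto
    have D: "4 * ((29/50) * (27/(10*(p+1)))) * ((29/50) * (3/(8*p*(p+1)))) = (272484/200000) / (p*(p+1)*(p+1))"
      using p1 by (simp add: divide_simps)
    have "p*(p*p + 2*p + 1) \<le> p*((9/4)*(p*p))" using H pp by (intro mult_left_mono) auto
    hence "p*(p+1)*(p+1) \<le> (9/4) * p^3" 
      by (simp add: power3_eq_cube algebra_simps)
    hence "(272484/200000) / ((9/4) * p^3) \<le> (272484/200000) / (p*(p+1)*(p+1))"
      using pp by (intro divide_left_mono) auto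
    moreover have "1/(20*p^3) \<le> (272484/200000) / ((9/4) * p^3)" using pp by (simp add: divide_simps)
    ultimately show ?thesis unfolding D by linarith
  qed
  ultimately show "1/(20*p^3) \<le> 2*cos b1 - 2*cos a2" using h2 by linarith
qed



lemma dmin_sym: "dmin I J = dmin J I"
proof -
  have "{\<bar>x - y\<bar> | x y. x \<in> I \<and> y \<in> J} = {\<bar>x - y\<bar> | x y. x \<in> J \<and> y \<in> I}"
    by (auto simp: abs_minus_commute) (metis abs_minus_commute)+
  then show ?thesis unfolding dmin_def by simp
qed

lemma Dmax_sym: "Dmax I J = Dmax J I"
proof -
  have "{\<bar>x - y\<bar> | x y. x \<in> I \<and> y \<in> J} = {\<bar>x - y\<bar> | x y. x \<in> J \<and> y \<in> I}"
    by (auto simp: abs_minus_commute) (metis abs_minus_commute)+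
  then show ?thesis unfolding Dmax_def by simp
qed

lemma ratio_sym: "ratio I J = ratio J I"
  unfolding ratio_def using dmin_sym Dmax_sym by simp

lemma pair_sets:
  fixes I1 I2 :: "real set" and a1 b1 a2 b2 L U :: real
  assumes B1: "\<And>x. x \<in> I1 \<Longrightarrow> 2*cos b1 \<le> x \<and> x \<le> 2*cos a1"
    and B2: "\<And>y. y \<in> I2 \<Longrightarrow> 2*cos b2 \<le> y \<and> y \<le> 2*cos a2"
    and ne: "x0 \<in> I1" "y0 \<in> I2"
    and o: "0 \<le> b1" "b1 < a2" "a2 \<le> pi"
    and L: "0 < L" "L \<le> 2*cos b1 - 2*cos a2"
    and U: "2*cos a1 - 2*cos b2 \<le> U"
  shows "prec I2 I1" "I1 \<inter> I2 = {}" "L \<le> dmin I1 I2" "Dmax I1 I2 \<le> U"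
    "ratio I1 I2 \<le> U / L"
proof -
  have cm: "cos a2 < cos b1" using cos_monotone_0_pi[OF o] .
  have gt: "y < x" if "x \<in> I1" "y \<in> I2" for x y
    using B1[OF that(1)] B2[OF that(2)] cm by linarith
  show "prec I2 I1" unfolding prec_def using gt by blast
  show "I1 \<inter> I2 = {}" using gt by fastforce
  define S where "S = {\<bar>x - y\<bar> | x y. x \<in> I1 \<and> y \<in> I2}"
  have Sne: "S \<noteq> {}" unfolding S_def using ne by blast
  have Slo: "L \<le> s" if sS: "s \<in> S" for s
  proof -
    obtain x y where "s = \<bar>x - y\<bar>" "x \<in> I1" "y \<in> I2" using sS unfolding S_def by blast
    then show ?thesis using B1 B2 gt L by fastforce
  qed
  have Shi: "s \<le> U" if sS: "s \<in> S" for s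
  proof -
    obtain x y where "s = \<bar>x - y\<bar>" "x \<in> I1" "y \<in> I2" using sS unfolding S_def by blast
    then show ?thesis using B1 B2 gt U by fastforce
  qed
  have d: "L \<le> dmin I1 I2" unfolding dmin_def S_def[symmetric] using Sne Slo by (intro cInf_greatest) auto
  have D: "Dmax I1 I2 \<le> U" unfolding Dmax_def S_def[symmetric] using Sne Shi by (intro cSup_least) auto
  show "L \<le> dmin I1 I2" "Dmax I1 I2 \<le> U" using d D by auto
  obtain s0 where "s0 \<in> S" using Sne by blast
  hence U0: "0 \<le> U" using Shi Slo L by fastforce
  have "ratio I1 I2 \<le> U / dmin I1 I2" unfolding ratio_def using D d L by (intro divide_right_mono) auto
  also have "\<dots> \<le> U / L" using d L U0 by (intro divide_left_mono) auto
  finally show "ratio I1 I2 \<le> U / L" .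
qed

lemma Aset_bounds:
  fixes c h x :: real
  assumes "x \<in> {2 * cos \<theta> | \<theta>. \<bar>\<theta> - c\<bar> \<le> h}" "0 \<le> c - h" "c + h \<le> pi"
  shows "2*cos (c+h) \<le> x \<and> x \<le> 2*cos (c-h)"
proof -
  obtain \<theta> where t: "x = 2 * cos \<theta>" "\<bar>\<theta> - c\<bar> \<le> h" using assms(1) by blast
  have "cos (c+h) \<le> cos \<theta>" using t assms by (intro cos_monotone_0_pi_le) auto
  moreover have "cos \<theta> \<le> cos (c-h)" using t assms by (intro cos_monotone_0_pi_le) auto
  ultimately show ?thesis using t by simp
qed

lemma Jint_bounds:
  assumes "x \<in> Jint q l" "0 \<le> real l * pi / real q - eps q l * pi / real q"
    "real l * pi / real q + eps q l * pi / real q \<le> pi"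
  shows "2*cos (real l * pi / real q + eps q l * pi / real q) \<le> x \<and> x \<le> 2*cos (real l * pi / real q - eps q l * pi / real q)"
  using Aset_bounds assms unfolding Jint_def by blast

lemma Jint_ne: assumes "0 \<le> eps q l" shows "2 * cos (real l * pi / real q) \<in> Jint q l"
  unfolding Jint_def using assms by (auto intro!: exI[of _ "real l * pi / real q"] divide_nonneg_nonneg)

lemma pairU:
  fixes p :: real and \<alpha>1 \<beta>1 \<alpha>2 \<beta>2 :: real
  assumes p: "p \<ge> 2" and o: "\<alpha>1 \<le> \<beta>1" "\<beta>1 < \<alpha>2" "\<alpha>2 \<le> \<beta>2"
    and w1: "\<beta>1 - \<alpha>1 \<le> 6*(\<alpha>2-\<beta>1)" and w2: "\<beta>2 - \<alpha>2 \<le> 6*(\<alpha>2-\<beta>1)"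
    and w1': "\<beta>1 - \<alpha>1 \<le> (p+1)/5" and w2': "\<beta>2 - \<alpha>2 \<le> (p+1)/5"
    and lo: "9*p/10 \<le> \<alpha>1" and hi: "\<beta>2 \<le> p*(p+1) - 9*p/10"
    and g: "1/4 \<le> \<alpha>2 - \<beta>1"
    and B1: "\<And>x. x \<in> I1 \<Longrightarrow> 2*cos (pi/(p*(p+1))*\<beta>1) \<le> x \<and> x \<le> 2*cos (pi/(p*(p+1))*\<alpha>1)"
    and B2: "\<And>y. y \<in> I2 \<Longrightarrow> 2*cos (pi/(p*(p+1))*\<beta>2) \<le> y \<and> y \<le> 2*cos (pi/(p*(p+1))*\<alpha>2)"
    and ne: "x0 \<in> I1" "y0 \<in> I2"
  shows "prec I2 I1" "I1 \<inter> I2 = {}" "1/(20*p^3) \<le> dmin I1 I2" "ratio I1 I2 \<le> 40"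
proof -
  define c where "c = pi/(p*(p+1))"
  have pp: "0 < p" using p by simp
  have pn: "p+1 \<noteq> 0" "p \<noteq> 0" using pp by auto
  have c0: "0 < c" unfolding c_def using pp by simp
  have e1: "c*((p+1)/5) = pi/(5*p)" unfolding c_def using pn by (simp add: divide_simps; simp add: algebra_simps)
  have e2: "c*(9*p/10) = 9*pi/(10*(p+1))" unfolding c_def using pn by (simp add: divide_simps; simp add: algebra_simps)
  have e3: "c*(p*(p+1) - 9*p/10) = pi - 9*pi/(10*(p+1))" unfolding c_def using pn by (simp add: divide_simps; simp add: algebra_simps)
  have e4: "c*(1/4) = pi/(4*p*(p+1))" unfolding c_def using pn by (simp add: divide_simps; simp add: algebra_simps)
  have m: "c*x \<le> c*y" if "x \<le> y" for x y using c0 that by simp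
  have T: "cos (c*\<alpha>1) - cos (c*\<beta>2) \<le> 40*(cos (c*\<beta>1) - cos (c*\<alpha>2))"
     "1/(20*p^3) \<le> 2*cos (c*\<beta>1) - 2*cos (c*\<alpha>2)"
  proof -
    have h1: "c*\<beta>1 - c*\<alpha>1 \<le> 6*(c*\<alpha>2-c*\<beta>1)" using m[OF w1] by (simp add: algebra_simps)
    have h2: "c*\<beta>2 - c*\<alpha>2 \<le> 6*(c*\<alpha>2-c*\<beta>1)" using m[OF w2] by (simp add: algebra_simps)
    have h3: "c*\<beta>1 - c*\<alpha>1 \<le> pi/(5*p)" using m[OF w1'] e1 by (simp add: algebra_simps)
    have h4: "c*\<beta>2 - c*\<alpha>2 \<le> pi/(5*p)" using m[OF w2'] e1 by (simp add: algebra_simps)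
    have h5: "9*pi/(10*(p+1)) \<le> c*\<alpha>1" using m[OF lo] e2 by simp
    have h6: "c*\<beta>2 \<le> pi - 9*pi/(10*(p+1))" using m[OF hi] e3 by simp
    have "c*(1/4) \<le> c*\<alpha>2 - c*\<beta>1" using m[OF g] by (simp add: right_diff_distrib)
    hence h7: "pi/(4*p*(p+1)) \<le> c*\<alpha>2 - c*\<beta>1" using e4 by linarith
    have o': "c*\<alpha>1 \<le> c*\<beta>1" "c*\<beta>1 < c*\<alpha>2" "c*\<alpha>2 \<le> c*\<beta>2" using o c0 by auto
    show "cos (c*\<alpha>1) - cos (c*\<beta>2) \<le> 40*(cos (c*\<beta>1) - cos (c*\<alpha>2))"
     "1/(20*p^3) \<le> 2*cos (c*\<beta>1) - 2*cos (c*\<alpha>2)"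
      using trig_main[OF p o' h1 h2 h3 h4 h5 h6 h7] by auto
  qed
  have pos: "0 < 1/(20*p^3)" using pp by simp
  have o2: "0 \<le> c*\<beta>1" "c*\<beta>1 < c*\<alpha>2" "c*\<alpha>2 \<le> pi"
  proof -
    have "0 \<le> 9*p/10" using pp by simp
    then show "0 \<le> c*\<beta>1" using c0 lo o by simp
    show "c*\<beta>1 < c*\<alpha>2" using c0 o by simp
    have "c*\<alpha>2 \<le> c*(p*(p+1) - 9*p/10)" using m o hi by auto
    then show "c*\<alpha>2 \<le> pi" using e3 pp by (smt (verit) divide_nonneg_nonneg pi_gt_zero)
  qed
  have Lp: "0 < 2*cos (c*\<beta>1) - 2*cos (c*\<alpha>2)" using T(2) pos by linarith
  note R = pair_sets[OF B1[unfolded c_def[symmetric]] B2[unfolded c_def[symmetric]] ne o2 Lp order_refl order_refl]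
  show "prec I2 I1" "I1 \<inter> I2 = {}" using R by auto
  show "1/(20*p^3) \<le> dmin I1 I2" using R(3) T(2) by linarith
  have "ratio I1 I2 \<le> (2*cos (c*\<alpha>1) - 2*cos (c*\<beta>2)) / (2*cos (c*\<beta>1) - 2*cos (c*\<alpha>2))" using R by auto
  also have "\<dots> \<le> 40" using T Lp by (simp add: divide_simps)
  finally show "ratio I1 I2 \<le> 40" .
qed



lemma eps_pos: assumes "1 \<le> l" "l < q" shows "0 < eps q l"
  using assms unfolding eps_def by (auto simp: min_def)

lemma eps_le: "eps q l \<le> 1/10"
  unfolding eps_def by (auto simp: min_def)

lemma eps_small: "q \<le> 4 \<Longrightarrow> eps q l = 1/10"
  unfolding eps_def by simp


lemma min3_2: "min a (min b c) \<le> (b::real)" by (simp add: min_le_iff_disj)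
lemma min3_3: "min a (min b c) \<le> (c::real)" by (simp add: min_le_iff_disj)
lemma eps_b1: assumes "5 \<le> q" shows "eps q l * real q \<le> (real l + 1/10) * 25/98"
proof -
  have "eps q l = min 0.1 (min ((real l + 0.1) / (3.92 * real q)) ((real q - real l + 0.1) / (3.92 * real q)))"
    using assms unfolding eps_def by simp
  hence "eps q l \<le> (real l + 0.1) / (3.92 * real q)" using min3_2 by simp
  then have "eps q l * real q \<le> (real l + 0.1) / (3.92 * real q) * real q" by (intro mult_right_mono) auto
  also have "\<dots> = (real l + 0.1) / 3.92" using assms by simp
  also have "\<dots> = (real l + 1/10) * 25/98" by simp
  finally show ?thesis .
qed
lemma eps_b2: assumes "5 \<le> q" shows "eps q l * real q \<le> (real q - real l + 1/10) * 25/98"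
proof -
  have "eps q l = min 0.1 (min ((real l + 0.1) / (3.92 * real q)) ((real q - real l + 0.1) / (3.92 * real q)))"
    using assms unfolding eps_def by simp
  hence "eps q l \<le> (real q - real l + 0.1) / (3.92 * real q)" using min3_3 by simp
  then have "eps q l * real q \<le> (real q - real l + 0.1) / (3.92 * real q) * real q" by (intro mult_right_mono) auto
  also have "\<dots> = (real q - real l + 0.1) / 3.92" using assms by simp
  also have "\<dots> = (real q - real l + 1/10) * 25/98" by simp
  finally show ?thesis .
qed

lemma eps_sym: assumes "l < q" shows "eps q (q - l) = eps q l"
  using assms unfolding eps_def by (auto simp: min_def of_nat_diff)

lemma pairJ:
  fixes p :: nat and \<alpha>1 \<beta>1 \<alpha>2 \<beta>2 :: real
  assumes p: "2 \<le> p" and l: "1 \<le> l1" "1 \<le> l2" "l1 < q1" "l2 < q2"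
    and E: "pi/(real p*(real p+1)) * \<alpha>1 = real l1 * pi / real q1 - eps q1 l1 * pi / real q1"
           "pi/(real p*(real p+1)) * \<beta>1 = real l1 * pi / real q1 + eps q1 l1 * pi / real q1"
           "pi/(real p*(real p+1)) * \<alpha>2 = real l2 * pi / real q2 - eps q2 l2 * pi / real q2"
           "pi/(real p*(real p+1)) * \<beta>2 = real l2 * pi / real q2 + eps q2 l2 * pi / real q2"
    and o: "\<alpha>1 \<le> \<beta>1" "\<beta>1 < \<alpha>2" "\<alpha>2 \<le> \<beta>2"
    and w1: "\<beta>1 - \<alpha>1 \<le> 6*(\<alpha>2-\<beta>1)" and w2: "\<beta>2 - \<alpha>2 \<le> 6*(\<alpha>2-\<beta>1)"
    and w1': "\<beta>1 - \<alpha>1 \<le> (real p+1)/5" and w2': "\<beta>2 - \<alpha>2 \<le> (real p+1)/5"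
    and lo: "9*real p/10 \<le> \<alpha>1" and hi: "\<beta>2 \<le> real p*(real p+1) - 9*real p/10"
    and g: "1/4 \<le> \<alpha>2 - \<beta>1"
  shows "prec (Jint q2 l2) (Jint q1 l1)" "Jint q1 l1 \<inter> Jint q2 l2 = {}"
    "1/(20*real p^3) \<le> dmin (Jint q1 l1) (Jint q2 l2)" "ratio (Jint q1 l1) (Jint q2 l2) \<le> 40"
proof -
  define c where "c = pi/(real p*(real p+1))"
  have pp: "0 < real p" using p by simp
  have c0: "0 < c" unfolding c_def using pp by simp
  have e3: "c*(real p*(real p+1) - 9*real p/10) = pi - 9*pi/(10*(real p+1))" unfolding c_def using pp
    by (simp add: divide_simps; simp add: algebra_simps)
  have "0 \<le> 9*real p/10" by simp
  hence a1: "0 \<le> c*\<alpha>1" using lo c0 by simp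
  have "c*\<beta>2 \<le> c*(real p*(real p+1) - 9*real p/10)" using hi c0 by simp
  hence b2: "c*\<beta>2 \<le> pi" using e3 pp by (smt (verit) divide_nonneg_nonneg pi_gt_zero)
  have oc: "c*\<alpha>1 \<le> c*\<beta>1" "c*\<beta>1 \<le> c*\<alpha>2" "c*\<alpha>2 \<le> c*\<beta>2" using o c0 by auto
  have B1: "2*cos (pi/(real p*(real p+1))*\<beta>1) \<le> x \<and> x \<le> 2*cos (pi/(real p*(real p+1))*\<alpha>1)"
    if "x \<in> Jint q1 l1" for x
    using Jint_bounds[OF that] E a1 b2 oc unfolding c_def by simp
  have B2: "2*cos (pi/(real p*(real p+1))*\<beta>2) \<le> x \<and> x \<le> 2*cos (pi/(real p*(real p+1))*\<alpha>2)"
    if "x \<in> Jint q2 l2" for x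
    using Jint_bounds[OF that] E a1 b2 oc unfolding c_def by simp
  have ne1: "2 * cos (real l1 * pi / real q1) \<in> Jint q1 l1" using eps_pos[OF l(1) l(3)] by (intro Jint_ne) simp
  have ne2: "2 * cos (real l2 * pi / real q2) \<in> Jint q2 l2" using eps_pos[OF l(2) l(4)] by (intro Jint_ne) simp
  have p': "2 \<le> real p" using p by simp
  note R = pairU[OF p' o w1 w2 w1' w2' lo hi g B1 B2 ne1 ne2]
  show "prec (Jint q2 l2) (Jint q1 l1)" "Jint q1 l1 \<inter> Jint q2 l2 = {}"
    "1/(20*real p^3) \<le> dmin (Jint q1 l1) (Jint q2 l2)" "ratio (Jint q1 l1) (Jint q2 l2) \<le> 40"
    using R by auto
qed




lemma S_bound:
  fixes p l k :: nat and e e' :: real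
  assumes p: "2 \<le> p" and k: "1 \<le> k"
    and e: "0 < e" "e \<le> 1/10" and e': "0 < e'" "e' \<le> 1/10"
    and b: "5 \<le> p \<Longrightarrow> e * real p \<le> (real k + 1/10) * 25/98"
    and b': "4 \<le> p \<Longrightarrow> e' * (real p + 1) \<le> (real k + 1/10) * 25/98"
    and s: "p \<le> 4 \<Longrightarrow> e = 1/10" "p \<le> 3 \<Longrightarrow> e' = 1/10"
  shows "e * (real p + 1) + e' * real p \<le> (73/100) * real k"
proof -
  have kk: "1 \<le> real k" using k by simp
  consider "p \<le> 3" | "p = 4" | "5 \<le> p" by linarith
  then show ?thesis
  proof cases
    case 1
    then have "real p \<le> 3" by simp
    moreover have E: "e = 1/10" "e' = 1/10" using s 1 by auto
    ultimately show ?thesis unfolding E using kk by (simp add: field_simps)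
  next
    case 2
    then have "e' * 5 \<le> (real k + 1/10) * 25/98" using b' by simp
    moreover have E: "e = 1/10" using s 2 by auto
    ultimately show ?thesis unfolding E using kk 2 by (simp add: field_simps)
  next
    case 3
    have "e * 5 \<le> e * real p" using 3 e by (intro mult_left_mono) auto
    moreover have "e' * real p \<le> e' * (real p + 1)" using e' by (intro mult_left_mono) auto
    moreover note b[OF 3] b'
    ultimately show ?thesis using 3 kk by (simp add: field_simps)
  qed
qed



lemma adjA:
  fixes P L e e' :: real
  assumes P: "2 \<le> P" and L: "1 \<le> L" "L \<le> P - 1" and e: "0 < e" "e \<le> 1/10" and e': "0 < e'" "e' \<le> 1/10"
    and S: "e * (P + 1) + e' * P \<le> 73/100 * L"
  defines "\<alpha>1 \<equiv> (L - e') * P" and "\<beta>1 \<equiv> (L + e') * P" and "\<alpha>2 \<equiv> (L - e) * (P+1)" and "\<beta>2 \<equiv> (L + e) * (P+1)"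
  shows "\<alpha>1 \<le> \<beta>1" "\<beta>1 < \<alpha>2" "\<alpha>2 \<le> \<beta>2"
    "\<beta>1 - \<alpha>1 \<le> 6*(\<alpha>2-\<beta>1)" "\<beta>2 - \<alpha>2 \<le> 6*(\<alpha>2-\<beta>1)"
    "\<beta>1 - \<alpha>1 \<le> (P+1)/5" "\<beta>2 - \<alpha>2 \<le> (P+1)/5"
    "9*P/10 \<le> \<alpha>1" "\<beta>2 \<le> P*(P+1) - 9*P/10" "1/4 \<le> \<alpha>2 - \<beta>1"
proof -
  have f1: "0 \<le> e' * P" "0 \<le> e * (P+1)" using e e' P by auto
  have f2: "e' * P \<le> 1/10 * P" using e' P by (intro mult_right_mono) auto
  have f3: "e * (P+1) \<le> 1/10 * (P+1)" using e P by (intro mult_right_mono) auto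
  have f4: "9/10 * P \<le> (L - e') * P" using e' L P by (intro mult_right_mono) auto
  have f5: "(L + e) * (P+1) \<le> (P - 9/10) * (P+1)" using e L P by (intro mult_right_mono) auto
  have gap: "\<alpha>2 - \<beta>1 = L - (e * (P + 1) + e' * P)" unfolding \<alpha>2_def \<beta>1_def by (simp add: algebra_simps)
  have w1: "\<beta>1 - \<alpha>1 = 2 * (e' * P)" unfolding \<alpha>1_def \<beta>1_def by (simp add: algebra_simps)
  have w2: "\<beta>2 - \<alpha>2 = 2 * (e * (P+1))" unfolding \<alpha>2_def \<beta>2_def by (simp add: algebra_simps)
  show "\<alpha>1 \<le> \<beta>1" "\<beta>1 < \<alpha>2" "\<alpha>2 \<le> \<beta>2" using gap w1 w2 f1 S L by linarith+
  have g6: "6*(\<alpha>2-\<beta>1) = 6*L - 6*(e * (P + 1)) - 6*(e' * P)" unfolding gap by (simp add: algebra_simps)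
  have S': "100*(e * (P + 1)) + 100*(e' * P) \<le> 73 * L" using S by (simp add: field_simps)
  show "\<beta>1 - \<alpha>1 \<le> 6*(\<alpha>2-\<beta>1)" "\<beta>2 - \<alpha>2 \<le> 6*(\<alpha>2-\<beta>1)" unfolding g6 w1 w2 using f1 S' L by linarith+
  show "\<beta>1 - \<alpha>1 \<le> (P+1)/5" "\<beta>2 - \<alpha>2 \<le> (P+1)/5" using w1 w2 f2 f3 by (simp_all add: field_simps)
  show "9*P/10 \<le> \<alpha>1" using f4 unfolding \<alpha>1_def by simp
  show "\<beta>2 \<le> P*(P+1) - 9*P/10" using f5 P unfolding \<beta>2_def by (simp add: field_simps)
  show "1/4 \<le> \<alpha>2 - \<beta>1" using gap S L by linarith
qed



lemma adjB:
  fixes P L e e' :: real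
  assumes P: "2 \<le> P" and L: "1 \<le> L" "L \<le> P - 1" and e: "0 < e" "e \<le> 1/10" and e': "0 < e'" "e' \<le> 1/10"
    and S: "e * (P + 1) + e' * P \<le> 73/100 * (P - L)"
  defines "\<alpha>1 \<equiv> (L - e) * (P+1)" and "\<beta>1 \<equiv> (L + e) * (P+1)" and "\<alpha>2 \<equiv> (L + 1 - e') * P" and "\<beta>2 \<equiv> (L + 1 + e') * P"
  shows "\<alpha>1 \<le> \<beta>1" "\<beta>1 < \<alpha>2" "\<alpha>2 \<le> \<beta>2"
    "\<beta>1 - \<alpha>1 \<le> 6*(\<alpha>2-\<beta>1)" "\<beta>2 - \<alpha>2 \<le> 6*(\<alpha>2-\<beta>1)"
    "\<beta>1 - \<alpha>1 \<le> (P+1)/5" "\<beta>2 - \<alpha>2 \<le> (P+1)/5"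
    "9*P/10 \<le> \<alpha>1" "\<beta>2 \<le> P*(P+1) - 9*P/10" "1/4 \<le> \<alpha>2 - \<beta>1"
proof -
  have f1: "0 \<le> e' * P" "0 \<le> e * (P+1)" using e e' P by auto
  have f2: "e' * P \<le> 1/10 * P" using e' P by (intro mult_right_mono) auto
  have f3: "e * (P+1) \<le> 1/10 * (P+1)" using e P by (intro mult_right_mono) auto
  have f4: "9/10 * (P+1) \<le> (L - e) * (P+1)" using e L P by (intro mult_right_mono) auto
  have f5: "(L + 1 + e') * P \<le> (P + 1/10) * P" using e' L P by (intro mult_right_mono) auto
  have gap: "\<alpha>2 - \<beta>1 = (P - L) - (e * (P + 1) + e' * P)" unfolding \<alpha>2_def \<beta>1_def by (simp add: algebra_simps)
  have w1: "\<beta>1 - \<alpha>1 = 2 * (e * (P+1))" unfolding \<alpha>1_def \<beta>1_def by (simp add: algebra_simps)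
  have w2: "\<beta>2 - \<alpha>2 = 2 * (e' * P)" unfolding \<alpha>2_def \<beta>2_def by (simp add: algebra_simps)
  have S': "100*(e * (P + 1)) + 100*(e' * P) \<le> 73 * P - 73 * L" using S by (simp add: field_simps)
  show "\<alpha>1 \<le> \<beta>1" using gap w1 w2 f1 S' L by linarith
  show "\<beta>1 < \<alpha>2" using gap w1 w2 f1 S' L by linarith
  show "\<alpha>2 \<le> \<beta>2" using gap w1 w2 f1 S' L by linarith
  have g6: "6*(\<alpha>2-\<beta>1) = 6*P - 6*L - 6*(e * (P + 1)) - 6*(e' * P)" unfolding gap by (simp add: algebra_simps)
  show "\<beta>1 - \<alpha>1 \<le> 6*(\<alpha>2-\<beta>1)" unfolding g6 w1 w2 using f1 S' L by linarith
  show "\<beta>2 - \<alpha>2 \<le> 6*(\<alpha>2-\<beta>1)" unfolding g6 w1 w2 using f1 S' L by linarith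
  show "\<beta>1 - \<alpha>1 \<le> (P+1)/5" "\<beta>2 - \<alpha>2 \<le> (P+1)/5" using w1 w2 f2 f3 by (simp_all add: field_simps)
  show "9*P/10 \<le> \<alpha>1" using f4 unfolding \<alpha>1_def by (simp add: field_simps)
  show "\<beta>2 \<le> P*(P+1) - 9*P/10" using f5 P unfolding \<beta>2_def by (simp add: field_simps)
  show "1/4 \<le> \<alpha>2 - \<beta>1" using gap S' L by linarith
qed

lemma farA:
  fixes P L M e e' :: real
  assumes P: "2 \<le> P" and L: "M + 1 \<le> L" "L \<le> P - 1" and M: "1 \<le> M" and e: "0 < e" "e \<le> 1/10" and e': "0 < e'" "e' \<le> 1/10"
  defines "\<alpha>1 \<equiv> (M - e') * P" and "\<beta>1 \<equiv> (M + e') * P" and "\<alpha>2 \<equiv> (L - e) * (P+1)" and "\<beta>2 \<equiv> (L + e) * (P+1)"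
  shows "\<alpha>1 \<le> \<beta>1" "\<beta>1 < \<alpha>2" "\<alpha>2 \<le> \<beta>2"
    "\<beta>1 - \<alpha>1 \<le> 6*(\<alpha>2-\<beta>1)" "\<beta>2 - \<alpha>2 \<le> 6*(\<alpha>2-\<beta>1)"
    "\<beta>1 - \<alpha>1 \<le> (P+1)/5" "\<beta>2 - \<alpha>2 \<le> (P+1)/5"
    "9*P/10 \<le> \<alpha>1" "\<beta>2 \<le> P*(P+1) - 9*P/10" "1/4 \<le> \<alpha>2 - \<beta>1"
proof -
  have f1: "0 \<le> e' * P" "0 \<le> e * (P+1)" using e e' P by auto
  have f2: "e' * P \<le> 1/10 * P" using e' P by (intro mult_right_mono) auto
  have f3: "e * (P+1) \<le> 1/10 * (P+1)" using e P by (intro mult_right_mono) auto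
  have f4: "9/10 * P \<le> (M - e') * P" using e' M P by (intro mult_right_mono) auto
  have f5: "(L + e) * (P+1) \<le> (P - 9/10) * (P+1)" using e L P by (intro mult_right_mono) auto
  have f6: "M * P \<le> (L - 1) * P" using L P by (intro mult_right_mono) auto
  have gap: "\<alpha>2 - \<beta>1 = L * P + L - e * (P + 1) - M * P - e' * P" unfolding \<alpha>2_def \<beta>1_def by (simp add: algebra_simps)
  have w1: "\<beta>1 - \<alpha>1 = 2 * (e' * P)" unfolding \<alpha>1_def \<beta>1_def by (simp add: algebra_simps)
  have w2: "\<beta>2 - \<alpha>2 = 2 * (e * (P+1))" unfolding \<alpha>2_def \<beta>2_def by (simp add: algebra_simps)
  have f6': "M * P \<le> L * P - P" using f6 by (simp add: algebra_simps)
  have f2': "10 * (e' * P) \<le> P" using f2 by simp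
  have f3': "10 * (e * (P+1)) \<le> P + 1" using f3 by simp
  show "\<alpha>1 \<le> \<beta>1" using gap w1 w2 f1 f2' f3' f6' L M P by linarith
  show "\<beta>1 < \<alpha>2" using gap w1 w2 f1 f2' f3' f6' L M P by linarith
  show "\<alpha>2 \<le> \<beta>2" using gap w1 w2 f1 f2' f3' f6' L M P by linarith
  have g6: "6*(\<alpha>2-\<beta>1) = 6*(L * P) + 6*L - 6*(e * (P + 1)) - 6*(M * P) - 6*(e' * P)" unfolding gap by (simp add: algebra_simps)
  show "\<beta>1 - \<alpha>1 \<le> 6*(\<alpha>2-\<beta>1)" unfolding g6 w1 w2 using f1 f2' f3' f6' L M P by linarith
  show "\<beta>2 - \<alpha>2 \<le> 6*(\<alpha>2-\<beta>1)" unfolding g6 w1 w2 using f1 f2' f3' f6' L M P by linarith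
  show "\<beta>1 - \<alpha>1 \<le> (P+1)/5" "\<beta>2 - \<alpha>2 \<le> (P+1)/5" using w1 w2 f2 f3 by (simp_all add: field_simps)
  show "9*P/10 \<le> \<alpha>1" using f4 unfolding \<alpha>1_def by (simp add: field_simps)
  show "\<beta>2 \<le> P*(P+1) - 9*P/10" using f5 P unfolding \<beta>2_def by (simp add: field_simps)
  show "1/4 \<le> \<alpha>2 - \<beta>1" using gap f1 f2' f3' f6' L M P by linarith
qed

lemma farB:
  fixes P L M e e' :: real
  assumes P: "2 \<le> P" and L: "1 \<le> L" "L + 2 \<le> M" and M: "M \<le> P" and e: "0 < e" "e \<le> 1/10" and e': "0 < e'" "e' \<le> 1/10"
  defines "\<alpha>1 \<equiv> (L - e) * (P+1)" and "\<beta>1 \<equiv> (L + e) * (P+1)" and "\<alpha>2 \<equiv> (M - e') * P" and "\<beta>2 \<equiv> (M + e') * P"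
  shows "\<alpha>1 \<le> \<beta>1" "\<beta>1 < \<alpha>2" "\<alpha>2 \<le> \<beta>2"
    "\<beta>1 - \<alpha>1 \<le> 6*(\<alpha>2-\<beta>1)" "\<beta>2 - \<alpha>2 \<le> 6*(\<alpha>2-\<beta>1)"
    "\<beta>1 - \<alpha>1 \<le> (P+1)/5" "\<beta>2 - \<alpha>2 \<le> (P+1)/5"
    "9*P/10 \<le> \<alpha>1" "\<beta>2 \<le> P*(P+1) - 9*P/10" "1/4 \<le> \<alpha>2 - \<beta>1"
proof -
  have f1: "0 \<le> e' * P" "0 \<le> e * (P+1)" using e e' P by auto
  have f2: "e' * P \<le> 1/10 * P" using e' P by (intro mult_right_mono) auto
  have f3: "e * (P+1) \<le> 1/10 * (P+1)" using e P by (intro mult_right_mono) auto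
  have f4: "9/10 * (P+1) \<le> (L - e) * (P+1)" using e L P by (intro mult_right_mono) auto
  have f5: "(M + e') * P \<le> (P + 1/10) * P" using e' M P by (intro mult_right_mono) auto
  have f6: "(L + 2) * P \<le> M * P" using L P by (intro mult_right_mono) auto
  have gap: "\<alpha>2 - \<beta>1 = M * P - e' * P - L * P - L - e * (P + 1)" unfolding \<alpha>2_def \<beta>1_def by (simp add: algebra_simps)
  have w1: "\<beta>1 - \<alpha>1 = 2 * (e * (P+1))" unfolding \<alpha>1_def \<beta>1_def by (simp add: algebra_simps)
  have w2: "\<beta>2 - \<alpha>2 = 2 * (e' * P)" unfolding \<alpha>2_def \<beta>2_def by (simp add: algebra_simps)
  have f6': "L * P + 2 * P \<le> M * P" using f6 by (simp add: algebra_simps)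
  have f2': "10 * (e' * P) \<le> P" using f2 by simp
  have f3': "10 * (e * (P+1)) \<le> P + 1" using f3 by simp
  have LP: "L \<le> P - 2" using L M by linarith
  show "\<alpha>1 \<le> \<beta>1" using gap w1 w2 f1 f2' f3' f6' LP P by linarith
  show "\<beta>1 < \<alpha>2" using gap w1 w2 f1 f2' f3' f6' LP P by linarith
  show "\<alpha>2 \<le> \<beta>2" using gap w1 w2 f1 f2' f3' f6' LP P by linarith
  have g6: "6*(\<alpha>2-\<beta>1) = 6*(M * P) - 6*(e' * P) - 6*(L * P) - 6*L - 6*(e * (P + 1))" unfolding gap by (simp add: algebra_simps)
  show "\<beta>1 - \<alpha>1 \<le> 6*(\<alpha>2-\<beta>1)" unfolding g6 w1 w2 using f1 f2' f3' f6' LP P by linarith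
  show "\<beta>2 - \<alpha>2 \<le> 6*(\<alpha>2-\<beta>1)" unfolding g6 w1 w2 using f1 f2' f3' f6' LP P by linarith
  show "\<beta>1 - \<alpha>1 \<le> (P+1)/5" "\<beta>2 - \<alpha>2 \<le> (P+1)/5" using w1 w2 f2 f3 by (simp_all add: field_simps)
  show "9*P/10 \<le> \<alpha>1" using f4 unfolding \<alpha>1_def by (simp add: field_simps)
  show "\<beta>2 \<le> P*(P+1) - 9*P/10" using f5 P unfolding \<beta>2_def by (simp add: field_simps)
  show "1/4 \<le> \<alpha>2 - \<beta>1" using gap f1 f2' f3' f6' LP P by linarith
qed

lemma sameF:
  fixes P F L M e e' :: real
  assumes P: "2 \<le> P" and F: "P \<le> F" "F \<le> P + 1" and L: "1 \<le> L" "L + 1 \<le> M" and e: "0 < e" "e \<le> 1/10" and e': "0 < e'" "e' \<le> 1/10"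
    and hi: "(M + e') * F \<le> P*(P+1) - 9*P/10"
  defines "\<alpha>1 \<equiv> (L - e) * F" and "\<beta>1 \<equiv> (L + e) * F" and "\<alpha>2 \<equiv> (M - e') * F" and "\<beta>2 \<equiv> (M + e') * F"
  shows "\<alpha>1 \<le> \<beta>1" "\<beta>1 < \<alpha>2" "\<alpha>2 \<le> \<beta>2"
    "\<beta>1 - \<alpha>1 \<le> 6*(\<alpha>2-\<beta>1)" "\<beta>2 - \<alpha>2 \<le> 6*(\<alpha>2-\<beta>1)"
    "\<beta>1 - \<alpha>1 \<le> (P+1)/5" "\<beta>2 - \<alpha>2 \<le> (P+1)/5"
    "9*P/10 \<le> \<alpha>1" "\<beta>2 \<le> P*(P+1) - 9*P/10" "1/4 \<le> \<alpha>2 - \<beta>1"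
proof -
  have F0: "0 < F" using P F by linarith
  have gap: "\<alpha>2 - \<beta>1 = (M - L - e - e') * F" unfolding \<alpha>2_def \<beta>1_def by (simp add: algebra_simps)
  have w1: "\<beta>1 - \<alpha>1 = (2 * e) * F" unfolding \<alpha>1_def \<beta>1_def by (simp add: algebra_simps)
  have w2: "\<beta>2 - \<alpha>2 = (2 * e') * F" unfolding \<alpha>2_def \<beta>2_def by (simp add: algebra_simps)
  have g1: "(4/5) * F \<le> (M - L - e - e') * F" using L e e' F0 by (intro mult_right_mono) auto
  have a1: "(2 * e) * F \<le> (1/5) * F" using e F0 by (intro mult_right_mono) auto
  have a2: "(2 * e') * F \<le> (1/5) * F" using e' F0 by (intro mult_right_mono) auto
  have a3: "0 \<le> (2 * e) * F" "0 \<le> (2 * e') * F" using e e' F0 by auto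
  have a4: "(9/10) * F \<le> (L - e) * F" using e L F0 by (intro mult_right_mono) auto
  show "\<alpha>1 \<le> \<beta>1" using gap w1 w2 g1 a3 F0 by linarith
  show "\<beta>1 < \<alpha>2" using gap w1 w2 g1 a3 F0 by linarith
  show "\<alpha>2 \<le> \<beta>2" using gap w1 w2 g1 a3 F0 by linarith
  show "\<beta>1 - \<alpha>1 \<le> 6*(\<alpha>2-\<beta>1)" unfolding gap w1 w2 using g1 a1 a2 F0 by linarith
  show "\<beta>2 - \<alpha>2 \<le> 6*(\<alpha>2-\<beta>1)" unfolding gap w1 w2 using g1 a1 a2 F0 by linarith
  show "\<beta>1 - \<alpha>1 \<le> (P+1)/5" "\<beta>2 - \<alpha>2 \<le> (P+1)/5" unfolding w1 w2 using a1 a2 F by (simp_all add: field_simps)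
  show "9*P/10 \<le> \<alpha>1" unfolding \<alpha>1_def using a4 F by linarith
  show "\<beta>2 \<le> P*(P+1) - 9*P/10" using hi unfolding \<beta>2_def .
  show "1/4 \<le> \<alpha>2 - \<beta>1" unfolding gap using g1 F P by linarith
qed




lemma Eeq:
  fixes P Q L e F :: real
  assumes "0 < P" "Q * F = P * (P + 1)" "0 < Q"
  shows "pi/(P*(P+1)) * ((L - e) * F) = L * pi / Q - e * pi / Q"
    and "pi/(P*(P+1)) * ((L + e) * F) = L * pi / Q + e * pi / Q"
proof -
  have F: "F = P*(P+1)/Q" using assms by (simp add: field_simps)
  have "P + 1 \<noteq> 0" "P \<noteq> 0" "Q \<noteq> 0" using assms by auto
  then show "pi/(P*(P+1)) * ((L - e) * F) = L * pi / Q - e * pi / Q"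
    and "pi/(P*(P+1)) * ((L + e) * F) = L * pi / Q + e * pi / Q"
    unfolding F by (simp_all add: divide_simps; simp add: algebra_simps)+
qed

definition good :: "nat \<Rightarrow> real set \<Rightarrow> real set \<Rightarrow> bool" where
  "good p I1 I2 \<longleftrightarrow> prec I2 I1 \<and> I1 \<inter> I2 = {} \<and> 1/(20*real p^3) \<le> dmin I1 I2 \<and> ratio I1 I2 \<le> 40"

lemma caseLA:
  assumes p: "2 \<le> p" and lm: "1 \<le> l" "l < m" "m < p"
  shows "good p (Jint p l) (Jint p m)"
proof -
  let ?P = "real p"
  have P: "2 \<le> ?P" "0 < ?P" using p by auto
  have e1: "0 < eps p l" "eps p l \<le> 1/10" using eps_pos[of l p] eps_le lm by auto
  have e2: "0 < eps p m" "eps p m \<le> 1/10" using eps_pos[of m p] eps_le lm by auto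
  have L: "1 \<le> real l" "real l + 1 \<le> real m" "real m \<le> ?P - 1" using lm by auto
  have hi: "(real m + eps p m) * (?P + 1) \<le> ?P*(?P+1) - 9*?P/10"
  proof -
    have "(real m + eps p m) * (?P + 1) \<le> (?P - 9/10) * (?P + 1)" using L e2 P by (intro mult_right_mono) auto
    then show ?thesis using P by (simp add: field_simps)
  qed
  have F: "?P \<le> ?P + 1" "?P + 1 \<le> ?P + 1" by auto
  note C = sameF[OF P(1) F L(1,2) e1 e2 hi]
  have lm': "1 \<le> m" "l < p" "m < p" using lm by auto
  have Q: "real p * (real p + 1) = ?P * (?P + 1)" "0 < real p" using P by auto
  note E1 = Eeq[OF P(2) Q(1) Q(2), of "real l" "eps p l"]
  note E2 = Eeq[OF P(2) Q(1) Q(2), of "real m" "eps p m"]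
  show ?thesis unfolding good_def
    using pairJ[OF p lm(1) lm'(1) lm'(2) lm'(3) E1 E2 C] by auto
qed


lemma caseLB:
  assumes p: "2 \<le> p" and lm: "1 \<le> l" "l < m" "m < p + 1"
  shows "good p (Jint (p+1) l) (Jint (p+1) m)"
proof -
  let ?P = "real p"
  have P: "2 \<le> ?P" "0 < ?P" using p by auto
  have e1: "0 < eps (p+1) l" "eps (p+1) l \<le> 1/10" using eps_pos[of l "p+1"] eps_le lm by auto
  have e2: "0 < eps (p+1) m" "eps (p+1) m \<le> 1/10" using eps_pos[of m "p+1"] eps_le lm by auto
  have L: "1 \<le> real l" "real l + 1 \<le> real m" "real m \<le> ?P" using lm by auto
  have hi: "(real m + eps (p+1) m) * ?P \<le> ?P*(?P+1) - 9*?P/10"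
  proof -
    have "(real m + eps (p+1) m) * ?P \<le> (?P + 1/10) * ?P" using L e2 P by (intro mult_right_mono) auto
    then show ?thesis using P by (simp add: field_simps)
  qed
  have F: "?P \<le> ?P" "?P \<le> ?P + 1" by auto
  note C = sameF[OF P(1) F L(1,2) e1 e2 hi]
  have lm': "1 \<le> m" "l < p + 1" "m < p + 1" using lm by auto
  have Q: "real (p+1) * ?P = ?P * (?P + 1)" "0 < real (p+1)" using P by auto
  note E1 = Eeq[OF P(2) Q(1) Q(2), of "real l" "eps (p+1) l"]
  note E2 = Eeq[OF P(2) Q(1) Q(2), of "real m" "eps (p+1) m"]
  show ?thesis unfolding good_def
    using pairJ[OF p lm(1) lm'(1) lm'(2) lm'(3) E1 E2 C] by auto
qed

lemma Sb_LC:
  assumes p: "2 \<le> p" and l: "1 \<le> l" "l < p"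
  shows "eps p l * (real p + 1) + eps (p+1) l * real p \<le> 73/100 * real l"
proof -
  have b': "eps (p+1) l * (real p + 1) \<le> (real l + 1/10) * 25/98" if "4 \<le> p"
    using eps_b1[of "p+1" l] that by (simp add: add.commute)
  show ?thesis
    using S_bound[OF p l(1) eps_pos[OF l] eps_le eps_pos[of l "p+1"] eps_le eps_b1[of p l] b' eps_small eps_small] l by auto
qed

lemma Sb_LD:
  assumes p: "2 \<le> p" and l: "1 \<le> l" "l < p"
  shows "eps p l * (real p + 1) + eps (p+1) (l+1) * real p \<le> 73/100 * (real p - real l)"
proof -
  have k: "1 \<le> p - l" using l by auto
  have b: "eps p l * real p \<le> (real (p - l) + 1/10) * 25/98" if "5 \<le> p"
    using eps_b2[of p l] that l by (simp add: of_nat_diff)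
  have b': "eps (p+1) (l+1) * (real p + 1) \<le> (real (p - l) + 1/10) * 25/98" if "4 \<le> p"
    using eps_b2[of "p+1" "l+1"] that l by (simp add: of_nat_diff add.commute)
  have "eps p l * (real p + 1) + eps (p+1) (l+1) * real p \<le> 73/100 * real (p - l)"
    using S_bound[OF p k eps_pos[OF l] eps_le eps_pos[of "l+1" "p+1"] eps_le b b' eps_small eps_small] l by auto
  then show ?thesis using l by (simp add: of_nat_diff)
qed

lemma caseLC:
  assumes p: "2 \<le> p" and lm: "1 \<le> m" "m \<le> l" "l < p"
  shows "good p (Jint (p+1) m) (Jint p l)"
proof -
  let ?P = "real p"
  have P: "2 \<le> ?P" "0 < ?P" using p by auto
  have e1: "0 < eps p l" "eps p l \<le> 1/10" using eps_pos[of l p] eps_le lm by auto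
  have e2: "0 < eps (p+1) m" "eps (p+1) m \<le> 1/10" using eps_pos[of m "p+1"] eps_le lm by auto
  have lm': "1 \<le> l" "m < p + 1" using lm by auto
  have Qa: "real (p+1) * ?P = ?P * (?P + 1)" "0 < real (p+1)" using P by auto
  have Qb: "real p * (?P + 1) = ?P * (?P + 1)" "0 < real p" using P by auto
  note E1 = Eeq[OF P(2) Qa(1) Qa(2), of "real m" "eps (p+1) m"]
  note E2 = Eeq[OF P(2) Qb(1) Qb(2), of "real l" "eps p l"]
  show ?thesis
  proof (cases "m = l")
    case True
    have L: "1 \<le> real l" "real l \<le> ?P - 1" using lm by auto
    have e2': "0 < eps (p+1) l" "eps (p+1) l \<le> 1/10" using e2 True by auto
    note C = adjA[OF P(1) L e1 e2' Sb_LC[OF p lm'(1) lm(3)]]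
    note E1' = Eeq[OF P(2) Qa(1) Qa(2), of "real l" "eps (p+1) l"]
    have l': "l < p + 1" using lm by auto
    show ?thesis unfolding good_def True
      using pairJ[OF p lm'(1) lm'(1) l' lm(3) E1' E2 C] by auto
  next
    case False
    have L: "real m + 1 \<le> real l" "real l \<le> ?P - 1" "1 \<le> real m" using lm False by auto
    note C = farA[OF P(1) L e1 e2]
    show ?thesis unfolding good_def
      using pairJ[OF p lm(1) lm'(1) lm'(2) lm(3) E1 E2 C] by auto
  qed
qed

lemma caseLD:
  assumes p: "2 \<le> p" and lm: "1 \<le> l" "l < m" "l < p" "m < p + 1"
  shows "good p (Jint p l) (Jint (p+1) m)"
proof -
  let ?P = "real p"
  have P: "2 \<le> ?P" "0 < ?P" using p by auto
  have e1: "0 < eps p l" "eps p l \<le> 1/10" using eps_pos[of l p] eps_le lm by auto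
  have e2: "0 < eps (p+1) m" "eps (p+1) m \<le> 1/10" using eps_pos[of m "p+1"] eps_le lm by auto
  have lm': "1 \<le> m" using lm by auto
  have Qa: "real (p+1) * ?P = ?P * (?P + 1)" "0 < real (p+1)" using P by auto
  have Qb: "real p * (?P + 1) = ?P * (?P + 1)" "0 < real p" using P by auto
  note E1 = Eeq[OF P(2) Qb(1) Qb(2), of "real l" "eps p l"]
  note E2 = Eeq[OF P(2) Qa(1) Qa(2), of "real m" "eps (p+1) m"]
  show ?thesis
  proof (cases "m = l + 1")
    case True
    have L: "1 \<le> real l" "real l \<le> ?P - 1" using lm by auto
    have e2': "0 < eps (p+1) (l+1)" "eps (p+1) (l+1) \<le> 1/10" using e2 True by auto
    note C0 = adjB[OF P(1) L e1 e2' Sb_LD[OF p lm(1) lm(3)]]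
    have r: "real l + 1 = real (l+1)" by simp
    note C = C0[unfolded r]
    note E2' = Eeq[OF P(2) Qa(1) Qa(2), of "real (l+1)" "eps (p+1) (l+1)"]
    have l': "1 \<le> l + 1" "l + 1 < p + 1" using lm by auto
    show ?thesis unfolding good_def True
      using pairJ[OF p lm(1) l'(1) lm(3) l'(2) E1 E2' C] by auto
  next
    case False
    have L: "1 \<le> real l" "real l + 2 \<le> real m" "real m \<le> ?P" using lm False by auto
    note C = farB[OF P(1) L e1 e2]
    show ?thesis unfolding good_def
      using pairJ[OF p lm(1) lm'(1) lm(3) lm(4) E1 E2 C] by auto
  qed
qed



lemma cheb2: "S n (2 * cos t) * sin t = sin (real n * t) \<and> S (Suc n) (2 * cos t) * sin t = sin (real (Suc n) * t)"
proof (induction n)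
  case 0 then show ?case by simp
next
  case (Suc n)
  have a: "sin (real (Suc (Suc n)) * t) = sin (real (Suc n) * t + t)" by (simp add: algebra_simps)
  have b: "sin (real n * t) = sin (real (Suc n) * t - t)" by (simp add: algebra_simps)
  have "S (Suc (Suc n)) (2 * cos t) * sin t = 2 * cos t * (S (Suc n) (2 * cos t) * sin t) - S n (2 * cos t) * sin t"
    by (simp add: algebra_simps)
  also have "\<dots> = 2 * cos t * sin (real (Suc n) * t) - sin (real n * t)" using Suc by simp
  also have "\<dots> = sin (real (Suc (Suc n)) * t)" unfolding a b sin_add sin_diff by (simp add: algebra_simps)
  finally show ?case using Suc by simp
qed

lemma cheb: "S n (2 * cos t) * sin t = sin (real n * t)"
  using cheb2 by blast

lemma sin_shift: "\<bar>sin (real l * pi + x)\<bar> = \<bar>sin x\<bar>"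
  by (simp add: sin_add abs_mult)

lemma sym_part:
  assumes "1 \<le> l" "l < p"
  shows "Jint p l = uminus ` Jint p (p - l)"
proof -
  have ep: "eps p (p - l) = eps p l" using eps_sym assms by simp
  have pp: "0 < real p" using assms by simp
  have c: "real (p - l) * pi / real p = pi - real l * pi / real p" using assms pp
    by (simp add: of_nat_diff divide_simps algebra_simps)
  show ?thesis
  proof
    show "Jint p l \<subseteq> uminus ` Jint p (p - l)"
    proof
      fix x assume "x \<in> Jint p l"
      then obtain t where t: "x = 2 * cos t" "\<bar>t - real l * pi / real p\<bar> \<le> eps p l * pi / real p"
        unfolding Jint_def by blast
      have "2 * cos (pi - t) \<in> Jint p (p - l)" unfolding Jint_def ep c using t(2)
        by (auto intro!: exI[of _ "pi - t"] simp: abs_minus_commute)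
      moreover have "x = - (2 * cos (pi - t))" using t(1) by simp
      ultimately show "x \<in> uminus ` Jint p (p - l)" by blast
    qed
  next
    show "uminus ` Jint p (p - l) \<subseteq> Jint p l"
    proof
      fix x assume "x \<in> uminus ` Jint p (p - l)"
      then obtain t where t: "x = - (2 * cos t)" "\<bar>t - real (p - l) * pi / real p\<bar> \<le> eps p l * pi / real p"
        unfolding Jint_def ep by blast
      have "\<bar>(pi - t) - real l * pi / real p\<bar> \<le> eps p l * pi / real p" using t(2) unfolding c
        by (simp add: abs_minus_commute algebra_simps)
      moreover have "x = 2 * cos (pi - t)" using t(1) by simp
      ultimately show "x \<in> Jint p l" unfolding Jint_def by blast
    qed
  qed
qed



lemma I_sub_J:
  assumes l: "1 \<le> l" "l < p"
  shows "Iint p l \<subseteq> Jint p l"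
proof
  fix x assume "x \<in> Iint p l"
  then obtain t where t: "x = 2 * cos t" "\<bar>t - real l * pi / real p\<bar> \<le> 0.1 * pi / real p"
      "\<bar>S p (2 * cos t)\<bar> \<le> 1/4" unfolding Iint_def by blast
  define d where "d = \<bar>t - real l * pi / real p\<bar>"
  have pp: "0 < real p" using l by simp
  have goal: "d \<le> eps p l * pi / real p"
  proof (cases "p \<le> 4")
    case True
    then show ?thesis using t(2) unfolding d_def eps_small[OF True] by simp
  next
    case False
    then have p5: "5 \<le> p" by simp
    have P5: "5 \<le> real p" using p5 by simp
    have d1: "d \<le> pi / (10 * real p)" using t(2) unfolding d_def by simp
    have ab: "t - real l * pi / real p \<le> 0.1 * pi / real p" "real l * pi / real p - t \<le> 0.1 * pi / real p"
      using t(2) by (auto simp: abs_le_iff)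
    have e1: "(real l - 1/10) * pi / real p = real l * pi / real p - 0.1 * pi / real p"
      and e2: "(real l + 1/10) * pi / real p = real l * pi / real p + 0.1 * pi / real p"
      by (simp_all add: diff_divide_distrib add_divide_distrib algebra_simps)
    have tl: "(real l - 1/10) * pi / real p \<le> t" and tu: "t \<le> (real l + 1/10) * pi / real p"
      unfolding e1 e2 using ab by linarith+
    have t0: "0 < t"
    proof -
      have "0 < (real l - 1/10) * pi / real p" using l pp by (intro divide_pos_pos mult_pos_pos) auto
      then show ?thesis using tl by linarith
    qed
    have tpi: "t < pi"
    proof -
      have "(real l + 1/10) * pi / real p < real p * pi / real p" using l pp
        by (intro divide_strict_right_mono mult_strict_right_mono) auto
      then show ?thesis using tu pp by simp
    qed
    have st: "0 < sin t" using t0 tpi by (rule sin_gt_zero)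
    have "\<bar>sin (real p * t)\<bar> = \<bar>S p (2 * cos t) * sin t\<bar>" using cheb[of p t] by simp
    also have "\<dots> = \<bar>S p (2 * cos t)\<bar> * sin t" using st by (simp add: abs_mult)
    also have "\<dots> \<le> 1/4 * sin t" using t(3) st by (intro mult_right_mono) auto
    finally have A: "\<bar>sin (real p * t)\<bar> \<le> sin t / 4" by simp
    have "real p * t = real l * pi + real p * (t - real l * pi / real p)" using pp by (simp add: field_simps)
    hence "\<bar>sin (real p * t)\<bar> = \<bar>sin (real p * (t - real l * pi / real p))\<bar>" using sin_shift by simp
    also have "\<dots> = \<bar>sin (real p * d)\<bar>"
    proof -
      have "\<bar>sin (real p * (t - real l * pi / real p))\<bar> = \<bar>sin (- (real p * (t - real l * pi / real p)))\<bar>"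
        by (simp only: sin_minus abs_minus_cancel)
      moreover have "- (real p * (t - real l * pi / real p)) = real p * (real l * pi / real p - t)" by (simp add: algebra_simps)
      ultimately show ?thesis unfolding d_def by (cases "0 \<le> t - real l * pi / real p") auto
    qed
    finally have B: "\<bar>sin (real p * d)\<bar> \<le> sin t / 4" using A by simp
    have pd: "real p * d \<le> pi/10" using d1 pp by (simp add: field_simps)
    have "49/50 * (real p * d) \<le> sin (real p * d)" using pd d_def pp by (intro sin_lin2) auto
    hence C0: "49/50 * (real p * d) \<le> sin t / 4" using B by linarith
    have C: "196/50 * (real p * d) \<le> sin t" using C0 by (simp add: mult.commute)
    have s1: "sin t \<le> (real l + 1/10) * pi / real p" using sin_x_le_x[of t] t0 tu by linarith
    have "sin t = sin (pi - t)" by simp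
    also have "\<dots> \<le> pi - t" using tpi by (intro sin_x_le_x) simp
    also have "\<dots> \<le> (real p - real l + 1/10) * pi / real p"
      using tl pp by (simp add: field_simps)
    finally have s2: "sin t \<le> (real p - real l + 1/10) * pi / real p" .
    have dA: "d \<le> (real l + 0.1) / (3.92 * real p) * pi / real p"
    proof -
      have "196/50 * (real p * d) \<le> (real l + 1/10) * pi / real p" using C s1 by linarith
      then show ?thesis using pp by (simp add: field_simps)
    qed
    have dB: "d \<le> (real p - real l + 0.1) / (3.92 * real p) * pi / real p"
    proof -
      have "196/50 * (real p * d) \<le> (real p - real l + 1/10) * pi / real p" using C s2 by linarith
      then show ?thesis using pp by (simp add: field_simps)
    qed
    have d0: "d \<le> 0.1 * pi / real p" using t(2) unfolding d_def .
    have e: "eps p l = min 0.1 (min ((real l + 0.1) / (3.92 * real p)) ((real p - real l + 0.1) / (3.92 * real p)))"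
      using p5 unfolding eps_def by simp
    show ?thesis unfolding e using d0 dA dB by (auto simp: min_def)
  qed
  show "x \<in> Jint p l" unfolding Jint_def using t(1) goal d_def by blast
qed



definition ok :: "nat \<Rightarrow> real set \<Rightarrow> real set \<Rightarrow> bool" where
  "ok p I J \<longleftrightarrow> I \<inter> J = {} \<and> 1/(20*real p^3) \<le> dmin I J \<and> ratio I J \<le> 40"

lemma good_ok: "good p A B \<Longrightarrow> ok p A B \<and> ok p B A"
  unfolding good_def ok_def using dmin_sym ratio_sym by (metis inf_commute)

lemma allpairs:
  assumes p: "2 \<le> p" and I: "I \<in> Jfam p" and J: "J \<in> Jfam p" and ne: "I \<noteq> J"
  shows "ok p I J"
proof -
  from I obtain q1 l1 where I': "I = Jint q1 l1" "(q1 = p \<and> 1 \<le> l1 \<and> l1 < p) \<or> (q1 = p+1 \<and> 1 \<le> l1 \<and> l1 < p+1)"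
    unfolding Jfam_def by blast
  from J obtain q2 l2 where J': "J = Jint q2 l2" "(q2 = p \<and> 1 \<le> l2 \<and> l2 < p) \<or> (q2 = p+1 \<and> 1 \<le> l2 \<and> l2 < p+1)"
    unfolding Jfam_def by blast
  from I'(2) show ?thesis
  proof
    assume a: "q1 = p \<and> 1 \<le> l1 \<and> l1 < p"
    from J'(2) show ?thesis
    proof
      assume b: "q2 = p \<and> 1 \<le> l2 \<and> l2 < p"
      have "l1 \<noteq> l2" using ne I' J' a b by auto
      then consider "l1 < l2" | "l2 < l1" by linarith
      then show ?thesis
      proof cases
        case 1 then show ?thesis using good_ok[OF caseLA[OF p, of l1 l2]] a b I' J' by auto
      next
        case 2 then show ?thesis using good_ok[OF caseLA[OF p, of l2 l1]] a b I' J' by auto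
      qed
    next
      assume b: "q2 = p+1 \<and> 1 \<le> l2 \<and> l2 < p+1"
      consider "l2 \<le> l1" | "l1 < l2" by linarith
      then show ?thesis
      proof cases
        case 1 then show ?thesis using good_ok[OF caseLC[OF p, of l2 l1]] a b I' J' by auto
      next
        case 2 then show ?thesis using good_ok[OF caseLD[OF p, of l1 l2]] a b I' J' by auto
      qed
    qed
  next
    assume a: "q1 = p+1 \<and> 1 \<le> l1 \<and> l1 < p+1"
    from J'(2) show ?thesis
    proof
      assume b: "q2 = p \<and> 1 \<le> l2 \<and> l2 < p"
      consider "l1 \<le> l2" | "l2 < l1" by linarith
      then show ?thesis
      proof cases
        case 1 then show ?thesis using good_ok[OF caseLC[OF p, of l1 l2]] a b I' J' by auto
      next
        case 2 then show ?thesis using good_ok[OF caseLD[OF p, of l2 l1]] a b I' J' by auto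
      qed
    next
      assume b: "q2 = p+1 \<and> 1 \<le> l2 \<and> l2 < p+1"
      have "l1 \<noteq> l2" using ne I' J' a b by auto
      then consider "l1 < l2" | "l2 < l1" by linarith
      then show ?thesis
      proof cases
        case 1 then show ?thesis using good_ok[OF caseLB[OF p, of l1 l2]] a b I' J' by auto
      next
        case 2 then show ?thesis using good_ok[OF caseLB[OF p, of l2 l1]] a b I' J' by auto
      qed
    qed
  qed
qed

theorem proposition7p2:
  fixes p :: nat
  assumes "p \<ge> 2"
  shows "(\<forall>l. 1 \<le> l \<and> l < p \<longrightarrow>
            Jint p l = uminus ` Jint p (p - l) \<and> Iint p l \<subseteq> Jint p l)
       \<and> (\<forall>I\<in>Jfam p. \<forall>J\<in>Jfam p. I \<noteq> J \<longrightarrow> I \<inter> J = {})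
       \<and> (\<forall>l. 1 \<le> l \<and> l < p \<longrightarrow>
            prec (Jint (p+1) (l+1)) (Jint p l) \<and> prec (Jint p l) (Jint (p+1) l))
       \<and> fam_r (Jfam p) \<le> 40
       \<and> fam_d (Jfam p) \<ge> 1 / (20 * real p ^ 3)"
proof (intro conjI)
  have p: "2 \<le> p" using assms .
  show "\<forall>l. 1 \<le> l \<and> l < p \<longrightarrow> Jint p l = uminus ` Jint p (p - l) \<and> Iint p l \<subseteq> Jint p l"
    using sym_part I_sub_J by blast
  show "\<forall>I\<in>Jfam p. \<forall>J\<in>Jfam p. I \<noteq> J \<longrightarrow> I \<inter> J = {}"
    using allpairs[OF p] unfolding ok_def by blast
  show "\<forall>l. 1 \<le> l \<and> l < p \<longrightarrow> prec (Jint (p+1) (l+1)) (Jint p l) \<and> prec (Jint p l) (Jint (p+1) l)"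
  proof (intro allI impI conjI)
    fix l assume l: "1 \<le> l \<and> l < p"
    show "prec (Jint (p+1) (l+1)) (Jint p l)" using caseLD[OF p, of l "l+1"] l unfolding good_def by auto
    show "prec (Jint p l) (Jint (p+1) l)" using caseLC[OF p, of l l] l unfolding good_def by auto
  qed
  have A: "Jint p 1 \<in> Jfam p" "Jint (p+1) 1 \<in> Jfam p" using p unfolding Jfam_def by auto
  have dis: "Jint (p+1) 1 \<inter> Jint p 1 = {}" using caseLC[OF p, of 1 1] p unfolding good_def by auto
  have "2 * cos (real 1 * pi / real p) \<in> Jint p 1" using eps_pos[of 1 p] p by (intro Jint_ne) auto
  hence neq: "Jint p 1 \<noteq> Jint (p+1) 1" using dis by auto
  define R where "R = {ratio I J | I J. I \<in> Jfam p \<and> J \<in> Jfam p \<and> I \<noteq> J}"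
  have "R \<noteq> {}" unfolding R_def using A neq by blast
  moreover have "\<And>r. r \<in> R \<Longrightarrow> r \<le> 40" unfolding R_def using allpairs[OF p] unfolding ok_def by blast
  ultimately have "Sup R \<le> 40" by (intro cSup_least) auto
  then show "fam_r (Jfam p) \<le> 40" unfolding fam_r_def R_def .
  define D where "D = {dmin I J | I J. I \<in> Jfam p \<and> J \<in> Jfam p \<and> I \<noteq> J}"
  have "D \<noteq> {}" unfolding D_def using A neq by blast
  moreover have "\<And>r. r \<in> D \<Longrightarrow> 1 / (20 * real p ^ 3) \<le> r" unfolding D_def using allpairs[OF p] unfolding ok_def by blast
  ultimately have "1 / (20 * real p ^ 3) \<le> Inf D" by (intro cInf_greatest) auto
  then show "fam_d (Jfam p) \<ge> 1 / (20 * real p ^ 3)" unfolding fam_d_def D_def .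
qed


end
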